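(* Let $\rho\ge1$, $P_2>0$, and for $i=1,\dots,\rho$ let $0<\alpha_i<1$ and $\beta_i>0$. For $\xi>0$ define $$\varphi_i(\xi)=\max\Big(0,\;\frac{\alpha_i}{2}-1+\sqrt{\frac{\alpha_i^2}{4}+\frac{\alpha_i}{\beta_i}\xi}\Big),\qquad i=1,\dots,\rho.$$ Then the equation $P_2=\sum_{i=1}^{\rho}\beta_i\varphi_i(\xi)$ has a unique solution $\xi>0$, and for this $\xi$ the vector $x_i=\varphi_i(\xi)$, $i=1,\dots,\rho$, is an optimal solution of the convex problem $$\min_{x_1,\dots,x_\rho}\;-\sum_{i=1}^{\rho}\ln\Big\{1-\frac{\alpha_i}{1+x_i}\Big\}\quad\text{s.t.}\quad\sum_{i=1}^{\rho}\beta_i x_i\le P_2,\ \ x_i\ge0,\ i=1,\dots,\rho.$$ *)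

theory Defs
  imports Complex_Main
begin

definition phi :: "real \<Rightarrow> real \<Rightarrow> real \<Rightarrow> real" where
  "phi a b \<xi> = max 0 (a / 2 - 1 + sqrt (a\<^sup>2 / 4 + (a / b) * \<xi>))"

definition objective :: "nat \<Rightarrow> (nat \<Rightarrow> real) \<Rightarrow> (nat \<Rightarrow> real) \<Rightarrow> real" where
  "objective \<rho> \<alpha> x = - (\<Sum>i=1..\<rho>. ln (1 - \<alpha> i / (1 + x i)))"

definition feasible :: "nat \<Rightarrow> (nat \<Rightarrow> real) \<Rightarrow> real \<Rightarrow> (nat \<Rightarrow> real) \<Rightarrow> bool" where
  "feasible \<rho> \<beta> P2 x \<longleftrightarrow> (\<Sum>i=1..\<rho>. \<beta> i * x i) \<le> P2 \<and> (\<forall>i\<in>{1..\<rho>}. x i \<ge> 0)"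

end

theory Submission
  imports Defs
begin

lemma tangent:
  fixes a x y :: real
  assumes a: "0 < a" "a < 1" and x: "x \<ge> 0" and y: "y \<ge> 0"
  shows "- ln (1 - a / (1 + y)) \<ge> - ln (1 - a / (1 + x)) - (a / ((1+x)*(1+x-a))) * (y - x)"
proof -
  define u where "u = 1 + x"
  define v where "v = 1 + y"
  have u: "u \<ge> 1" and v: "v \<ge> 1" using x y by (auto simp: u_def v_def)
  have e1: "1 - a / (1 + y) = (v - a) / v" using v by (simp add: v_def field_simps)
  have e2: "1 - a / (1 + x) = (u - a) / u" using u by (simp add: u_def field_simps)
  define z where "z = ((u - a) / u) / ((v - a) / v)"
  have zpos: "z > 0" using u v a by (simp add: z_def)
  have "- ln ((v - a) / v) + ln ((u - a) / u) = ln z"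
    using u v a by (simp add: z_def ln_div ln_mult)
  have lnz: "ln z \<ge> 1 - 1 / z"
  proof -
    have "ln (1/z) \<le> 1/z - 1" using zpos by (intro ln_le_minus_one) simp
    then show ?thesis using zpos by (simp add: ln_div)
  qed
  have "1 - 1 / z = - a * (v - u) / (v * (u - a))"
    using u v a by (simp add: z_def field_simps)
  moreover have "- a * (v - u) / (v * (u - a)) \<ge> - (a / (u * (u - a))) * (v - u)"
  proof -
    have "(v - u) / v \<le> (v - u) / u"
    proof (cases "v \<ge> u")
      case True then show ?thesis using u v by (intro divide_left_mono) auto
    next
      case False
      then have "(u - v) / u \<le> (u - v) / v" using u v by (intro divide_left_mono) auto
      then show ?thesis by (metis minus_diff_eq minus_divide_left neg_le_iff_le)
    qed
    then have "(a / (u - a)) * ((v - u) / v) \<le> (a / (u - a)) * ((v - u) / u)"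
      using a u by (intro mult_left_mono) auto
    moreover have "- a * (v - u) / (v * (u - a)) = - ((a / (u - a)) * ((v - u) / v))" by simp
    moreover have "- (a / (u * (u - a))) * (v - u) = - ((a / (u - a)) * ((v - u) / u))" by simp
    ultimately show ?thesis by linarith
  qed
  ultimately have "ln z \<ge> - (a / (u * (u - a))) * (v - u)" using lnz by linarith
  moreover have "- ln ((v - a) / v) = ln z - ln ((u - a) / u)"
    using \<open>- ln ((v - a) / v) + ln ((u - a) / u) = ln z\<close> by linarith
  ultimately show ?thesis unfolding e1 e2 by (simp add: u_def v_def)
qed

lemma phi_nonneg: "phi a b \<xi> \<ge> 0" by (simp add: phi_def)

lemma phi_coord:
  fixes a b \<xi> y :: real
  assumes a: "0 < a" "a < 1" and b: "b > 0" and xi: "\<xi> > 0" and y: "y \<ge> 0"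
  shows "- ln (1 - a / (1 + y)) \<ge> - ln (1 - a / (1 + phi a b \<xi>)) - (b / \<xi>) * (y - phi a b \<xi>)"
proof -
  define x where "x = phi a b \<xi>"
  define s where "s = sqrt (a\<^sup>2 / 4 + (a / b) * \<xi>)"
  have s0: "s \<ge> 0" using a b xi by (simp add: s_def)
  have s2: "s\<^sup>2 = a\<^sup>2 / 4 + (a / b) * \<xi>" unfolding s_def using a b xi
    by (intro real_sqrt_pow2) (simp add: field_simps)
  have x0: "x \<ge> 0" by (simp add: x_def phi_nonneg)
  have "(a / ((1+x)*(1+x-a))) * (y - x) \<le> (b / \<xi>) * (y - x)"
  proof (cases "x > 0")
    case True
    then have xe: "x = a/2 - 1 + s" by (simp add: x_def phi_def s_def)
    have "(1+x)*(1+x-a) = s\<^sup>2 - a\<^sup>2/4" by (simp add: xe power2_eq_square algebra_simps)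
    also have "\<dots> = a * \<xi> / b" using s2 by simp
    finally have "a / ((1+x)*(1+x-a)) = b / \<xi>" using a b xi by simp
    then show ?thesis by simp
  next
    case False
    then have xz: "x = 0" using x0 by simp
    then have "a/2 - 1 + s \<le> 0" by (simp add: x_def phi_def s_def)
    then have "s \<le> 1 - a/2" by simp
    then have "s\<^sup>2 \<le> (1 - a/2)\<^sup>2" using s0 by (intro power_mono) auto
    then have "(a / b) * \<xi> \<le> 1 - a" using s2 by (simp add: power2_eq_square algebra_simps)
    then have "a * \<xi> \<le> b * (1 - a)" using b by (simp add: field_simps)
    then have "a / (1 - a) \<le> b / \<xi>" using a xi by (simp add: field_simps)
    then show ?thesis using xz y a by (intro mult_right_mono) auto
  qed
  moreover have "- ln (1 - a / (1 + y)) \<ge> - ln (1 - a / (1 + x)) - (a / ((1+x)*(1+x-a))) * (y - x)"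
    using tangent[OF a x0 y] .
  ultimately show ?thesis unfolding x_def by linarith
qed

lemma phi_mono:
  assumes "0 < a" "b > 0" "\<xi>1 \<le> \<xi>2"
  shows "phi a b \<xi>1 \<le> phi a b \<xi>2"
proof -
  have "(a / b) * \<xi>1 \<le> (a / b) * \<xi>2" using assms by (intro mult_left_mono) auto
  then have "sqrt (a\<^sup>2 / 4 + (a / b) * \<xi>1) \<le> sqrt (a\<^sup>2 / 4 + (a / b) * \<xi>2)" by simp
  then show ?thesis unfolding phi_def by (intro max.mono) auto
qed

lemma phi_strict:
  assumes "0 < a" "b > 0" "\<xi>1 < \<xi>2" "phi a b \<xi>1 > 0"
  shows "phi a b \<xi>1 < phi a b \<xi>2"
proof -
  have "(a / b) * \<xi>1 < (a / b) * \<xi>2" using assms by (intro mult_strict_left_mono) auto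
  then have "sqrt (a\<^sup>2 / 4 + (a / b) * \<xi>1) < sqrt (a\<^sup>2 / 4 + (a / b) * \<xi>2)" by simp
  then show ?thesis using assms(4) unfolding phi_def by (smt (verit))
qed

lemma phi_zero: "0 < a \<Longrightarrow> a < 1 \<Longrightarrow> phi a b 0 = 0"
  by (simp add: phi_def real_sqrt_divide max_def)

lemma phi_big:
  assumes "0 < a" "b > 0" "P > 0"
  shows "b * phi a b (b * (1 + P / b)\<^sup>2 / a) \<ge> P"
proof -
  have "a\<^sup>2 / 4 + (a / b) * (b * (1 + P / b)\<^sup>2 / a) \<ge> (1 + P / b)\<^sup>2"
    using assms by simp
  then have "sqrt (a\<^sup>2 / 4 + (a / b) * (b * (1 + P / b)\<^sup>2 / a)) \<ge> 1 + P / b"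
    by (rule real_le_rsqrt)
  then have "phi a b (b * (1 + P / b)\<^sup>2 / a) \<ge> P / b" using assms unfolding phi_def by auto
  then show ?thesis using assms by (simp add: field_simps)
qed

theorem mainTheorem3:
  fixes \<rho> :: nat and P2 :: real and \<alpha> \<beta> :: "nat \<Rightarrow> real"
  assumes "\<rho> \<ge> 1" and "P2 > 0"
    and "\<And>i. i \<in> {1..\<rho>} \<Longrightarrow> 0 < \<alpha> i \<and> \<alpha> i < 1"
    and "\<And>i. i \<in> {1..\<rho>} \<Longrightarrow> \<beta> i > 0"
  shows "(\<exists>!\<xi>. \<xi> > 0 \<and> P2 = (\<Sum>i=1..\<rho>. \<beta> i * phi (\<alpha> i) (\<beta> i) \<xi>))
       \<and> (\<forall>\<xi>. \<xi> > 0 \<and> P2 = (\<Sum>i=1..\<rho>. \<beta> i * phi (\<alpha> i) (\<beta> i) \<xi>) \<longrightarrow>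
           (feasible \<rho> \<beta> P2 (\<lambda>i. phi (\<alpha> i) (\<beta> i) \<xi>) \<and>
           (\<forall>y. feasible \<rho> \<beta> P2 y \<longrightarrow>
              objective \<rho> \<alpha> (\<lambda>i. phi (\<alpha> i) (\<beta> i) \<xi>) \<le> objective \<rho> \<alpha> y)))"
proof -
  define S where "S = (\<lambda>\<xi>. \<Sum>i=1..\<rho>. \<beta> i * phi (\<alpha> i) (\<beta> i) \<xi>)"
  have A: "\<And>i. i \<in> {1..\<rho>} \<Longrightarrow> 0 < \<alpha> i" "\<And>i. i \<in> {1..\<rho>} \<Longrightarrow> \<alpha> i < 1"
    using assms(3) by auto
  note B = assms(4)
  have one: "1 \<in> {1..\<rho>}" using assms(1) by simp
  have S0: "S 0 = 0" unfolding S_def using A by (simp add: phi_zero)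
  define M where "M = \<beta> 1 * (1 + P2 / \<beta> 1)\<^sup>2 / \<alpha> 1"
  have M0: "M \<ge> 0" using A(1)[OF one] B[OF one] by (simp add: M_def)
  have SM: "S M \<ge> P2"
  proof -
    have "P2 \<le> \<beta> 1 * phi (\<alpha> 1) (\<beta> 1) M"
      unfolding M_def using phi_big A(1)[OF one] B[OF one] assms(2) by blast
    also have "\<dots> \<le> S M" unfolding S_def
    proof (rule member_le_sum)
      fix i assume "i \<in> {1..\<rho>} - {1}"
      then have "\<beta> i > 0" using B by blast
      then show "0 \<le> \<beta> i * phi (\<alpha> i) (\<beta> i) M" using phi_nonneg by simp
    qed (use one in auto)
    finally show ?thesis .
  qed
  have cont: "continuous_on {0..M} S"
    unfolding S_def phi_def by (intro continuous_intros)
  obtain \<xi>0 where x0: "0 \<le> \<xi>0" "\<xi>0 \<le> M" "S \<xi>0 = P2"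
    using IVT'[of S 0 P2 M] S0 SM M0 cont assms(2) by auto
  have x0pos: "\<xi>0 > 0" using x0 S0 assms(2) by (cases "\<xi>0 = 0") auto
  have Smono_strict: "S \<xi>1 < S \<xi>2" if "0 < \<xi>1" "\<xi>1 < \<xi>2" "S \<xi>1 = P2" for \<xi>1 \<xi>2
  proof -
    have "\<exists>i\<in>{1..\<rho>}. phi (\<alpha> i) (\<beta> i) \<xi>1 > 0"
    proof (rule ccontr)
      assume "\<not> ?thesis"
      then have "\<forall>i\<in>{1..\<rho>}. phi (\<alpha> i) (\<beta> i) \<xi>1 = 0" using phi_nonneg
        by (metis order_less_le)
      then have "S \<xi>1 = 0" unfolding S_def by simp
      then show False using that assms(2) by simp
    qed
    then obtain j where j: "j \<in> {1..\<rho>}" "phi (\<alpha> j) (\<beta> j) \<xi>1 > 0" by blast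
    show ?thesis unfolding S_def
    proof (rule sum_strict_mono_ex1)
      show "\<forall>x\<in>{1..\<rho>}. \<beta> x * phi (\<alpha> x) (\<beta> x) \<xi>1 \<le> \<beta> x * phi (\<alpha> x) (\<beta> x) \<xi>2"
        using A B that by (auto intro!: mult_left_mono phi_mono simp: less_imp_le)
      show "\<exists>a\<in>{1..\<rho>}. \<beta> a * phi (\<alpha> a) (\<beta> a) \<xi>1 < \<beta> a * phi (\<alpha> a) (\<beta> a) \<xi>2"
      proof
        show "\<beta> j * phi (\<alpha> j) (\<beta> j) \<xi>1 < \<beta> j * phi (\<alpha> j) (\<beta> j) \<xi>2"
          using j A B that by (intro mult_strict_left_mono phi_strict) auto
      qed (rule j(1))
    qed simp
  qed
  have part1: "\<exists>!\<xi>. \<xi> > 0 \<and> P2 = S \<xi>"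
  proof
    show "\<xi>0 > 0 \<and> P2 = S \<xi>0" using x0pos x0 by simp
    fix \<xi> assume h: "\<xi> > 0 \<and> P2 = S \<xi>"
    show "\<xi> = \<xi>0"
    proof (rule ccontr)
      assume "\<xi> \<noteq> \<xi>0"
      then consider "\<xi> < \<xi>0" | "\<xi>0 < \<xi>" by linarith
      then show False
      proof cases
        case 1 then show ?thesis using Smono_strict[of \<xi> \<xi>0] h x0 by simp
      next
        case 2 then show ?thesis using Smono_strict[of \<xi>0 \<xi>] h x0 x0pos by simp
      qed
    qed
  qed
  have part2: "feasible \<rho> \<beta> P2 (\<lambda>i. phi (\<alpha> i) (\<beta> i) \<xi>) \<and>
           (\<forall>y. feasible \<rho> \<beta> P2 y \<longrightarrow>
              objective \<rho> \<alpha> (\<lambda>i. phi (\<alpha> i) (\<beta> i) \<xi>) \<le> objective \<rho> \<alpha> y)"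
    if h: "\<xi> > 0" "P2 = S \<xi>" for \<xi>
  proof
    show "feasible \<rho> \<beta> P2 (\<lambda>i. phi (\<alpha> i) (\<beta> i) \<xi>)"
      unfolding feasible_def using h by (simp add: S_def phi_nonneg)
    show "\<forall>y. feasible \<rho> \<beta> P2 y \<longrightarrow>
              objective \<rho> \<alpha> (\<lambda>i. phi (\<alpha> i) (\<beta> i) \<xi>) \<le> objective \<rho> \<alpha> y"
    proof (intro allI impI)
      fix y assume fy: "feasible \<rho> \<beta> P2 y"
      then have ys: "(\<Sum>i=1..\<rho>. \<beta> i * y i) \<le> P2" and yn: "\<And>i. i \<in> {1..\<rho>} \<Longrightarrow> y i \<ge> 0"
        unfolding feasible_def by auto
      have "(\<Sum>i=1..\<rho>. - ln (1 - \<alpha> i / (1 + phi (\<alpha> i) (\<beta> i) \<xi>)) - (\<beta> i / \<xi>) * (y i - phi (\<alpha> i) (\<beta> i) \<xi>))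
            \<le> (\<Sum>i=1..\<rho>. - ln (1 - \<alpha> i / (1 + y i)))"
        using A B yn h(1) by (intro sum_mono phi_coord) auto
      moreover have "(\<Sum>i=1..\<rho>. (\<beta> i / \<xi>) * (y i - phi (\<alpha> i) (\<beta> i) \<xi>))
           = ((\<Sum>i=1..\<rho>. \<beta> i * y i) - S \<xi>) / \<xi>"
        unfolding S_def by (simp add: sum_divide_distrib sum_subtractf right_diff_distrib diff_divide_distrib)
      moreover have "((\<Sum>i=1..\<rho>. \<beta> i * y i) - S \<xi>) / \<xi> \<le> 0"
        using ys h by (intro divide_nonpos_pos) auto
      ultimately show "objective \<rho> \<alpha> (\<lambda>i. phi (\<alpha> i) (\<beta> i) \<xi>) \<le> objective \<rho> \<alpha> y"
        unfolding objective_def by (simp add: sum_subtractf sum_negf)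
    qed
  qed
  show ?thesis using part1 part2 unfolding S_def by blast
qed

end
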